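(* (a) If $n\ge 1$, $\mathcal{P}=C_n$ and $L=\mathfrak{g}^{\prec}(\mathcal{P})$, then $b(L)=|Rel_{\overline{C}}(\mathcal{P})|=\frac{(n-1)(n-2)}{2}$. (b) If $n\ge 1$, $\mathcal{P}=\mathbf{2\times n}$ and $L=\mathfrak{g}^{\prec}(\mathcal{P})$, then $b(L)=|Rel_{\overline{C}}(\mathcal{P})|=\frac{(n-1)(3n-4)}{2}$. (c) If $m\ge 2$, $n\ge 1$, $\mathcal{P}=T_m(n)$ and $L=\mathfrak{g}^{\prec}(\mathcal{P})$, then $b(L)=|Rel_{\overline{C}}(\mathcal{P})|=\frac{(n-2)m^{n+1}+(1-n)m^n+m^2}{(m-1)^2}$.
   Context: All Lie algebras are over an algebraically closed field $\mathbf{k}$ of characteristic zero. For a finite poset $\mathcal{P}$, write $x\prec y$ for strict relations; a strict relation $p\prec q$ is covering if there is no $z$ with $p\prec z\prec q$, and $Rel_{\overline{C}}(\mathcal{P})$ is the set of non-covering strict relations. The nilpotent Lie poset algebra $\mathfrak{g}^{\prec}(\mathcal{P})$ is the Lie algebra (under the commutator bracket) of $|\mathcal{P}|\times|\mathcal{P}|$ matrices spanned by the matrix units $E_{p,q}$ with $p\prec q$ (rows and columns indexed by $\mathcal{P}$). The breadth of a Lie algebra $L$ is $b(L)=\max_{x\in L}\operatorname{rank}(\mathrm{ad}_x)$, where $\mathrm{ad}_x=[x,-]$. Posets: $C_n$ is the chain $1\prec 2\prec\cdots\prec n$. $\mathbf{2\times n}$ is the poset on $\{i_j : 1\le i\le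 n,\ 1\le j\le 2\}$ with $i_j\preceq i'_{j'}$ iff $i\le i'$ and $j\le j'$ (product of a 2-chain and an $n$-chain; covering relations $i_j\prec (i+1)_j$ and $i_1\prec i_2$). $T_m(n)$ (for $m\ge 2$) is the rooted complete $m$-ary tree of depth $n$: the poset on $\{i_k : 1\le k\le n,\ 1\le i\le m^{k-1}\}$ whose covering relations are $i_k\prec j_{k+1}$ for $1\le k<n$, $1\le i\le m^{k-1}$ and $m(i-1)+1\le j\le mi$, with the order being the transitive closure of these. *)

theory Defs
  imports Main "HOL-Library.Function_Algebras" "HOL-Computational_Algebra.Polynomial"
begin

definition alg_closed :: "'k::field itself \<Rightarrow> bool" where
  "alg_closed _ \<longleftrightarrow> (\<forall>p::'k poly. degree p > 0 \<longrightarrow> (\<exists>x. poly p x = 0))"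

text \<open>Matrices with rows/columns indexed by a poset carrier P are functions
  'a => 'a => 'k vanishing outside P x P.  Scalar multiplication:\<close>
definition mscale :: "'k::field \<Rightarrow> ('a \<Rightarrow> 'a \<Rightarrow> 'k) \<Rightarrow> ('a \<Rightarrow> 'a \<Rightarrow> 'k)" where
  "mscale c A = (\<lambda>i j. c * A i j)"

definition mbracket :: "'a set \<Rightarrow> ('a \<Rightarrow> 'a \<Rightarrow> 'k::field) \<Rightarrow> ('a \<Rightarrow> 'a \<Rightarrow> 'k) \<Rightarrow> ('a \<Rightarrow> 'a \<Rightarrow> 'k)" where
  "mbracket P A B = (\<lambda>i j. (\<Sum>k\<in>P. A i k * B k j) - (\<Sum>k\<in>P. B i k * A k j))"

definition lie_poset_alg :: "'k::field itself \<Rightarrow> 'a set \<Rightarrow> ('a \<Rightarrow> 'a \<Rightarrow> bool) \<Rightarrow> ('a \<Rightarrow> 'a \<Rightarrow> 'k) set" where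
  "lie_poset_alg _ P lt = {A. \<forall>i j. A i j \<noteq> 0 \<longrightarrow> i \<in> P \<and> j \<in> P \<and> lt i j}"

definition rank_ad :: "'a set \<Rightarrow> ('a \<Rightarrow> 'a \<Rightarrow> bool) \<Rightarrow> ('a \<Rightarrow> 'a \<Rightarrow> 'k::field) \<Rightarrow> nat" where
  "rank_ad P lt x = vector_space.dim mscale ((\<lambda>y. mbracket P x y) ` lie_poset_alg TYPE('k) P lt)"

definition breadth :: "'k::field itself \<Rightarrow> 'a set \<Rightarrow> ('a \<Rightarrow> 'a \<Rightarrow> bool) \<Rightarrow> nat" where
  "breadth T P lt = Max {rank_ad P lt x | x. x \<in> lie_poset_alg T P lt}"

definition noncov_rel :: "'a set \<Rightarrow> ('a \<Rightarrow> 'a \<Rightarrow> bool) \<Rightarrow> ('a \<times> 'a) set" where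
  "noncov_rel P lt = {(p, q). p \<in> P \<and> q \<in> P \<and> lt p q \<and> (\<exists>z\<in>P. lt p z \<and> lt z q)}"

definition chain_set :: "nat \<Rightarrow> nat set" where "chain_set n = {1..n}"
definition chain_lt :: "nat \<Rightarrow> nat \<Rightarrow> bool" where "chain_lt i j \<longleftrightarrow> i < j"

text \<open>2 x n: element i_j is the pair (i, j).\<close>
definition twon_set :: "nat \<Rightarrow> (nat \<times> nat) set" where
  "twon_set n = {(i, j). 1 \<le> i \<and> i \<le> n \<and> 1 \<le> j \<and> j \<le> 2}"
definition twon_lt :: "nat \<times> nat \<Rightarrow> nat \<times> nat \<Rightarrow> bool" where
  "twon_lt x y \<longleftrightarrow> fst x \<le> fst y \<and> snd x \<le> snd y \<and> x \<noteq> y"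

text \<open>T_m(n): element i_k is the pair (i, k); order = transitive closure of coverings.\<close>
definition tree_set :: "nat \<Rightarrow> nat \<Rightarrow> (nat \<times> nat) set" where
  "tree_set m n = {(i, k). 1 \<le> k \<and> k \<le> n \<and> 1 \<le> i \<and> i \<le> m ^ (k - 1)}"
definition tree_cover :: "nat \<Rightarrow> nat \<Rightarrow> ((nat \<times> nat) \<times> (nat \<times> nat)) set" where
  "tree_cover m n = {((i, k), (j, k + 1)) | i j k. 1 \<le> k \<and> k < n \<and> 1 \<le> i \<and> i \<le> m ^ (k - 1)
                      \<and> m * (i - 1) + 1 \<le> j \<and> j \<le> m * i}"
definition tree_lt :: "nat \<Rightarrow> nat \<Rightarrow> nat \<times> nat \<Rightarrow> nat \<times> nat \<Rightarrow> bool" where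
  "tree_lt m n x y \<longleftrightarrow> (x, y) \<in> (tree_cover m n)\<^sup>+"

end

theory Submission
  imports Defs
begin


interpretation mv: vector_space "mscale :: 'k::field \<Rightarrow> ('a \<Rightarrow> 'a \<Rightarrow> 'k) \<Rightarrow> ('a \<Rightarrow> 'a \<Rightarrow> 'k)"
  by unfold_locales (auto simp: mscale_def fun_eq_iff algebra_simps)

definition Em :: "'a \<times> 'a \<Rightarrow> 'a \<Rightarrow> 'a \<Rightarrow> 'k::field" where
  "Em s = (\<lambda>i j. if i = fst s \<and> j = snd s then 1 else 0)"

definition cov :: "'a set \<Rightarrow> ('a \<Rightarrow> 'a \<Rightarrow> bool) \<Rightarrow> 'a \<Rightarrow> 'a \<Rightarrow> bool" where
  "cov P lt u v \<longleftrightarrow> u \<in> P \<and> v \<in> P \<and> lt u v \<and> \<not>(\<exists>z\<in>P. lt u z \<and> lt z v)"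

definition x0 :: "'k::field itself \<Rightarrow> 'a set \<Rightarrow> ('a \<Rightarrow> 'a \<Rightarrow> bool) \<Rightarrow> 'a \<Rightarrow> 'a \<Rightarrow> 'k" where
  "x0 _ P lt = (\<lambda>i j. if cov P lt i j then 1 else 0)"

lemma sum_app2: "(sum f A) i j = (\<Sum>x\<in>A. f x i j)"
  by (induction A rule: infinite_finite_induct) auto

lemma bracket_E:
  assumes "a \<in> P" "b \<in> P" "finite P"
  shows "mbracket P (x0 TYPE('k::field) P lt) (Em (a,b)) i j
     = (if j = b \<and> cov P lt i a then 1 else 0) - (if i = a \<and> cov P lt b j then 1 else 0)"
proof -
  let ?x = "x0 TYPE('k) P lt"
  have 1: "(\<Sum>k\<in>P. ?x i k * Em (a,b) k j) = (\<Sum>k\<in>P. if k = a then (if j = b then ?x i a else 0) else 0)"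
    by (rule sum.cong) (auto simp: Em_def)
  have 2: "(\<Sum>k\<in>P. Em (a,b) i k * ?x k j) = (\<Sum>k\<in>P. if k = b then (if i = a then ?x b j else 0) else 0)"
    by (rule sum.cong) (auto simp: Em_def)
  show ?thesis unfolding mbracket_def 1 2 using assms by (simp add: x0_def)
qed

lemma sum_Em: "finite C \<Longrightarrow> (\<Sum>c\<in>C. Em (c,q)) i j = (if i \<in> C \<and> j = q then 1 else (0::'k::field))"
  by (cases "j = q") (auto simp: sum_app2 Em_def)

lemma sum_Em2: "finite D \<Longrightarrow> (\<Sum>d\<in>D. Em (a,d)) i j = (if i = a \<and> j \<in> D then 1 else (0::'k::field))"
  by (cases "i = a") (auto simp: sum_app2 Em_def)

lemma generic:
  fixes P :: "'a set" and lt :: "'a \<Rightarrow> 'a \<Rightarrow> bool" and f :: "'a \<times> 'a \<Rightarrow> nat"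
  assumes fin: "finite P"
    and tr: "\<And>a b c. a \<in> P \<Longrightarrow> b \<in> P \<Longrightarrow> c \<in> P \<Longrightarrow> lt a b \<Longrightarrow> lt b c \<Longrightarrow> lt a c"
    and H: "\<And>p q. (p,q) \<in> noncov_rel P lt \<Longrightarrow> \<exists>a. cov P lt p a \<and> lt a q
              \<and> (\<forall>c. cov P lt c a \<and> c \<noteq> p \<longrightarrow> f (c,q) < f (p,q))
              \<and> (\<forall>d. cov P lt q d \<longrightarrow> f (a,d) < f (p,q))"
  shows "breadth TYPE('k::field) P lt = card (noncov_rel P lt)"
proof -
  define S where "S = noncov_rel P lt"
  define L where "L = lie_poset_alg TYPE('k) P lt"
  define B where "B = (Em :: _ \<Rightarrow> _ \<Rightarrow> _ \<Rightarrow> 'k) ` S"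
  have finS: "finite S"
    by (rule finite_subset[of _ "P \<times> P"]) (auto simp: S_def noncov_rel_def fin)
  have injE: "inj_on (Em :: _ \<Rightarrow> _ \<Rightarrow> _ \<Rightarrow> 'k) S"
  proof (rule inj_onI)
    fix s t assume "s \<in> S" "t \<in> S" "(Em s :: _ \<Rightarrow> _ \<Rightarrow> 'k) = Em t"
    then have "(Em s :: _ \<Rightarrow> _ \<Rightarrow> 'k) (fst s) (snd s) = Em t (fst s) (snd s)" by simp
    then show "s = t" by (auto simp: Em_def split: if_splits intro: prod_eqI)
  qed
  have cardB: "card B = card S" unfolding B_def using injE by (rule card_image)
  have indep: "mv.independent B"
    unfolding mv.independent_explicit_module
  proof (intro allI impI)
    fix t u v assume t: "finite t" "t \<subseteq> B" "(\<Sum>v\<in>t. mscale (u v) v) = 0" "v \<in> t"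
    then obtain s where s: "s \<in> S" "v = Em s" unfolding B_def by auto
    have "0 = (\<Sum>w\<in>t. mscale (u w) w) (fst s) (snd s)" using t by simp
    also have "\<dots> = (\<Sum>w\<in>t. u w * w (fst s) (snd s))" by (simp add: sum_app2 mscale_def)
    also have "\<dots> = (\<Sum>w\<in>t. if w = v then u v else 0)"
    proof (rule sum.cong)
      fix w assume "w \<in> t"
      then obtain s' where "s' \<in> S" "w = Em s'" using t unfolding B_def by auto
      moreover have "w = v \<longleftrightarrow> s' = s" using \<open>s' \<in> S\<close> \<open>w = Em s'\<close> s inj_on_eq_iff[OF injE] by metis
      ultimately show "u w * w (fst s) (snd s) = (if w = v then u v else 0)"
        using s by (cases "s' = s") (auto simp: Em_def prod_eq_iff)
    qed simp
    also have "\<dots> = u v" using t by simp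
    finally show "u v = 0" by simp
  qed
  have W: "A \<in> mv.span B" if A: "\<And>i j. A i j \<noteq> 0 \<Longrightarrow> (i,j) \<in> S" for A :: "_ \<Rightarrow> _ \<Rightarrow> 'k"
  proof -
    have "A = (\<Sum>s\<in>S. mscale (A (fst s) (snd s)) (Em s))"
    proof (intro ext)
      fix i j
      have "(\<Sum>s\<in>S. mscale (A (fst s) (snd s)) (Em s)) i j = (\<Sum>s\<in>S. if s = (i,j) then A i j else 0)"
        unfolding sum_app2 by (rule sum.cong) (auto simp: mscale_def Em_def)
      also have "\<dots> = A i j" using finS A[of i j] by auto
      finally show "A i j = (\<Sum>s\<in>S. mscale (A (fst s) (snd s)) (Em s)) i j" by simp
    qed
    also have "\<dots> \<in> mv.span B"
      by (intro mv.span_sum mv.span_scale mv.span_base) (auto simp: B_def)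
    finally show ?thesis .
  qed
  have brW: "(i,j) \<in> S" if "x \<in> L" "y \<in> L" "mbracket P x y i j \<noteq> 0" for x y :: "_ \<Rightarrow> _ \<Rightarrow> 'k" and i j
  proof -
    from that(3) have "(\<Sum>k\<in>P. x i k * y k j) \<noteq> 0 \<or> (\<Sum>k\<in>P. y i k * x k j) \<noteq> 0"
      unfolding mbracket_def by auto
    then obtain k where k: "k \<in> P" "x i k * y k j \<noteq> 0 \<or> y i k * x k j \<noteq> 0"
      by (metis (mono_tags, lifting) sum.neutral)
    then have "i \<in> P \<and> j \<in> P \<and> lt i k \<and> lt k j"
      using that(1,2) unfolding L_def lie_poset_alg_def by auto
    then show ?thesis using k tr unfolding S_def noncov_rel_def by blast
  qed
  have ub: "rank_ad P lt x \<le> card S" if "x \<in> L" for x :: "_ \<Rightarrow> _ \<Rightarrow> 'k"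
  proof -
    have "(\<lambda>y. mbracket P x y) ` L \<subseteq> mv.span B"
      using brW[OF that] W by blast
    then have "mv.dim ((\<lambda>y. mbracket P x y) ` L) \<le> card B"
      using mv.dim_le_card finS B_def by blast
    then show ?thesis unfolding rank_ad_def L_def cardB .
  qed
  define X where "X = x0 TYPE('k) P lt"
  define Im where "Im = (\<lambda>y. mbracket P X y) ` L"
  have XL: "X \<in> L" unfolding X_def L_def lie_poset_alg_def x0_def cov_def by auto
  have key: "\<forall>p q. f (p,q) = N \<longrightarrow> (p,q) \<in> S \<longrightarrow> Em (p,q) \<in> mv.span Im" for N
  proof (induction N rule: less_induct)
    case (less N)
    show ?case
    proof (intro allI impI)
      fix p q assume fN: "f (p,q) = N" and pq: "(p,q) \<in> S"
      then obtain a where a: "cov P lt p a" "lt a q"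
        and ac: "\<forall>c. cov P lt c a \<and> c \<noteq> p \<longrightarrow> f (c,q) < f (p,q)"
        and ad: "\<forall>d. cov P lt q d \<longrightarrow> f (a,d) < f (p,q)"
        using H unfolding S_def by blast
      have pP: "p \<in> P" and qP: "q \<in> P" and aP: "a \<in> P" using pq a unfolding S_def noncov_rel_def cov_def by auto
      define C where "C = {c \<in> P. cov P lt c a \<and> c \<noteq> p}"
      define D where "D = {d \<in> P. cov P lt q d}"
      have finC: "finite C" and finD: "finite D" using fin unfolding C_def D_def by auto
      have eq: "(Em (p,q) :: _ \<Rightarrow> _ \<Rightarrow> 'k) = mbracket P X (Em (a,q)) - (\<Sum>c\<in>C. Em (c,q)) + (\<Sum>d\<in>D. Em (a,d))"
      proof (intro ext)
        fix i j
        have ci: "cov P lt i a \<longleftrightarrow> i = p \<or> i \<in> C" using a unfolding C_def cov_def by auto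
        have dj: "cov P lt q j \<longleftrightarrow> j \<in> D" unfolding D_def cov_def by auto
        show "(Em (p,q) :: _ \<Rightarrow> _ \<Rightarrow> 'k) i j = (mbracket P X (Em (a,q)) - (\<Sum>c\<in>C. Em (c,q)) + (\<Sum>d\<in>D. Em (a,d))) i j"
        proof -
          have pC: "p \<notin> C" unfolding C_def by auto
          have "(mbracket P X (Em (a,q)) - (\<Sum>c\<in>C. Em (c,q)) + (\<Sum>d\<in>D. Em (a,d))) i j
             = (if j = q \<and> (i = p \<or> i \<in> C) then 1 else 0) - (if i = a \<and> j \<in> D then 1 else 0)
               - (if i \<in> C \<and> j = q then 1 else 0) + (if i = a \<and> j \<in> D then (1::'k) else 0)"
            unfolding X_def plus_fun_apply minus_apply bracket_E[OF aP qP fin] sum_Em[OF finC] sum_Em2[OF finD] ci dj ..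
          also have "\<dots> = (if i = p \<and> j = q then 1 else 0)" using pC by (cases "j = q"; cases "i = p") auto
          finally show ?thesis by (simp add: Em_def)
        qed
      qed
      have "mbracket P X (Em (a,q)) \<in> Im"
        unfolding Im_def L_def lie_poset_alg_def using aP qP a by (auto simp: Em_def)
      moreover have "(\<Sum>c\<in>C. Em (c,q)) \<in> mv.span Im"
      proof (rule mv.span_sum)
        fix c assume c: "c \<in> C"
        then have "cov P lt c a" "c \<noteq> p" "c \<in> P" unfolding C_def by auto
        then have "(c,q) \<in> S" "f (c,q) < N"
          using ac fN tr[of c a q] aP qP a unfolding S_def noncov_rel_def cov_def by auto
        then show "Em (c,q) \<in> mv.span Im" using less by blast
      qed
      moreover have "(\<Sum>d\<in>D. Em (a,d)) \<in> mv.span Im"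
      proof (rule mv.span_sum)
        fix d assume d: "d \<in> D"
        then have "cov P lt q d" "d \<in> P" unfolding D_def by auto
        then have "(a,d) \<in> S" "f (a,d) < N"
          using ad fN tr[of a q d] aP qP a unfolding S_def noncov_rel_def cov_def by auto
        then show "Em (a,d) \<in> mv.span Im" using less by blast
      qed
      ultimately show "Em (p,q) \<in> mv.span Im"
        unfolding eq by (meson mv.span_add mv.span_diff mv.span_base)
    qed
  qed
  have BIm: "B \<subseteq> mv.span Im" unfolding B_def using key by auto
  have ImB: "Im \<subseteq> mv.span B" unfolding Im_def using brW[OF XL] W by blast
  have "mv.span B = mv.span Im"
    using BIm ImB by (metis mv.span_mono mv.span_span subset_antisym)
  then have rX: "rank_ad P lt X = card S"
    unfolding rank_ad_def Im_def[symmetric] L_def[symmetric]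
    using mv.dim_eq_card[OF _ indep] cardB by metis
  have "Max {rank_ad P lt x | x. x \<in> L} = card S"
  proof (rule Max_eqI)
    show "finite {rank_ad P lt x | x. x \<in> L}"
      by (rule finite_subset[of _ "{..card S}"]) (auto dest: ub)
    show "y \<le> card S" if "y \<in> {rank_ad P lt x | x. x \<in> L}" for y using that ub by auto
    show "card S \<in> {rank_ad P lt x | x. x \<in> L}" using rX XL by (metis (mono_tags, lifting) mem_Collect_eq)
  qed
  then show ?thesis unfolding breadth_def L_def S_def .
qed



lemma chain_noncov: "noncov_rel (chain_set n) chain_lt = {(p,q). 1 \<le> p \<and> p + 2 \<le> q \<and> q \<le> n}"
proof (rule set_eqI, clarify)
  fix p q :: nat
  show "(p,q) \<in> noncov_rel (chain_set n) chain_lt \<longleftrightarrow> (p,q) \<in> {(p,q). 1 \<le> p \<and> p + 2 \<le> q \<and> q \<le> n}"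
    unfolding noncov_rel_def chain_set_def chain_lt_def
    by (auto intro!: bexI[of _ "Suc p"])
qed

lemma chain_cov: "cov (chain_set n) chain_lt u v \<longleftrightarrow> 1 \<le> u \<and> v \<le> n \<and> v = Suc u"
  unfolding cov_def chain_set_def chain_lt_def
proof safe
  assume "\<not> (\<exists>z\<in>{1..n}. u < z \<and> z < v)" "u \<in> {1..n}" "v \<in> {1..n}" "u < v"
  show "v = Suc u"
  proof (rule ccontr)
    assume "v \<noteq> Suc u"
    then have "Suc u \<in> {1..n}" "u < Suc u" "Suc u < v" using \<open>u < v\<close> \<open>v \<in> {1..n}\<close> by auto
    then show False using \<open>\<not> (\<exists>z\<in>{1..n}. u < z \<and> z < v)\<close> by blast
  qed
qed auto

lemma chain_card: "2 * card {(p,q). 1 \<le> p \<and> p + 2 \<le> q \<and> q \<le> (n::nat)} = (n - 1) * (n - 2)"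
proof (induction n)
  case 0
  have e: "{(p, q). 1 \<le> p \<and> p + 2 \<le> q \<and> q \<le> (0::nat)} = {}" by auto
  show ?case by (simp only: e) simp
next
  case (Suc n)
  have eq: "{(p,q). 1 \<le> p \<and> p + 2 \<le> q \<and> q \<le> Suc n} = {(p,q). 1 \<le> p \<and> p + 2 \<le> q \<and> q \<le> n} \<union> (\<lambda>p. (p, Suc n)) ` {1..n-1}"
    by auto
  have fin: "finite {(p,q). 1 \<le> p \<and> p + 2 \<le> q \<and> q \<le> (n::nat)}"
    by (rule finite_subset[of _ "{..n} \<times> {..n}"]) auto
  have "card ({(p,q). 1 \<le> p \<and> p + 2 \<le> q \<and> q \<le> n} \<union> (\<lambda>p. (p, Suc n)) ` {1..n-1})
      = card {(p,q). 1 \<le> p \<and> p + 2 \<le> q \<and> q \<le> n} + card ((\<lambda>p. (p, Suc n)) ` {1..n-1})"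
    by (rule card_Un_disjoint) (use fin in auto)
  also have "card ((\<lambda>p. (p, Suc n)) ` {1..n-1}) = n - 1"
    by (subst card_image) (auto simp: inj_on_def)
  finally show ?case unfolding eq using Suc.IH
    by (cases n) (auto simp: algebra_simps)
qed

lemma part_a:
  assumes "n \<ge> 1"
  shows "breadth TYPE('k::field) (chain_set n) chain_lt = card (noncov_rel (chain_set n) chain_lt)
          \<and> real (card (noncov_rel (chain_set n) chain_lt)) = (real n - 1) * (real n - 2) / 2"
proof
  show "breadth TYPE('k::field) (chain_set n) chain_lt = card (noncov_rel (chain_set n) chain_lt)"
  proof (rule generic[where f = "\<lambda>s. n - snd s"], goal_cases)
    case 1 show ?case by (simp add: chain_set_def)
  next
    case (2 a b c) then show ?case by (simp add: chain_lt_def)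
  next
    case (3 p q)
    then have pq: "1 \<le> p" "p + 2 \<le> q" "q \<le> n" by (auto simp: chain_noncov)
    show ?case
      by (rule exI[of _ "Suc p"]) (use pq in \<open>auto simp: chain_cov chain_lt_def\<close>)
  qed
  have "2 * card (noncov_rel (chain_set n) chain_lt) = (n - 1) * (n - 2)"
    unfolding chain_noncov by (rule chain_card)
  then have "real (2 * card (noncov_rel (chain_set n) chain_lt)) = real ((n - 1) * (n - 2))" by simp
  then show "real (card (noncov_rel (chain_set n) chain_lt)) = (real n - 1) * (real n - 2) / 2"
    using assms by (cases "n = 1") (auto simp: of_nat_diff)
qed



definition NT :: "nat \<Rightarrow> ((nat \<times> nat) \<times> (nat \<times> nat)) set" where
  "NT n = {((a,b),(c,d)). 1 \<le> a \<and> 1 \<le> b \<and> b \<le> 2 \<and> c \<le> n \<and> d \<le> 2 \<and> a \<le> c \<and> b \<le> d \<and> a + b + 2 \<le> c + d}"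

lemma tw_noncov: "noncov_rel (twon_set n) twon_lt = NT n"
proof (rule set_eqI, clarify)
  fix a b c d :: nat
  show "((a,b),(c,d)) \<in> noncov_rel (twon_set n) twon_lt \<longleftrightarrow> ((a,b),(c,d)) \<in> NT n"
  proof
    assume "((a,b),(c,d)) \<in> noncov_rel (twon_set n) twon_lt"
    then obtain z where "z \<in> twon_set n" "twon_lt (a,b) z" "twon_lt z (c,d)" "(a,b) \<in> twon_set n" "(c,d) \<in> twon_set n"
      unfolding noncov_rel_def by auto
    then show "((a,b),(c,d)) \<in> NT n"
      unfolding NT_def twon_set_def twon_lt_def by (cases z) auto
  next
    assume A: "((a,b),(c,d)) \<in> NT n"
    show "((a,b),(c,d)) \<in> noncov_rel (twon_set n) twon_lt"
    proof (cases "a < c")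
      case True
      then have "(Suc a, b) \<in> twon_set n" "twon_lt (a,b) (Suc a, b)" "twon_lt (Suc a, b) (c,d)"
        "(a,b) \<in> twon_set n" "(c,d) \<in> twon_set n" "twon_lt (a,b) (c,d)"
        using A unfolding NT_def twon_set_def twon_lt_def by auto
      then show ?thesis unfolding noncov_rel_def by blast
    next
      case False
      have False using False A unfolding NT_def by auto
      then show ?thesis ..
    qed
  qed
qed

lemma tw_cov: "cov (twon_set n) twon_lt (a,b) (c,d) \<longleftrightarrow>
   1 \<le> a \<and> 1 \<le> b \<and> b \<le> 2 \<and> c \<le> n \<and> d \<le> 2 \<and> a \<le> c \<and> b \<le> d \<and> c + d = a + b + 1"
proof
  assume A: "cov (twon_set n) twon_lt (a,b) (c,d)"
  then have "((a,b),(c,d)) \<notin> NT n" unfolding cov_def tw_noncov[symmetric] noncov_rel_def by auto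
  then show "1 \<le> a \<and> 1 \<le> b \<and> b \<le> 2 \<and> c \<le> n \<and> d \<le> 2 \<and> a \<le> c \<and> b \<le> d \<and> c + d = a + b + 1"
    using A unfolding cov_def NT_def twon_set_def twon_lt_def by auto
next
  assume A: "1 \<le> a \<and> 1 \<le> b \<and> b \<le> 2 \<and> c \<le> n \<and> d \<le> 2 \<and> a \<le> c \<and> b \<le> d \<and> c + d = a + b + 1"
  have "\<not> (\<exists>z\<in>twon_set n. twon_lt (a,b) z \<and> twon_lt z (c,d))"
  proof
    assume "\<exists>z\<in>twon_set n. twon_lt (a,b) z \<and> twon_lt z (c,d)"
    then obtain x y where "twon_lt (a,b) (x,y)" "twon_lt (x,y) (c,d)" by auto
    then show False using A unfolding twon_lt_def by auto
  qed
  then show "cov (twon_set n) twon_lt (a,b) (c,d)"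
    using A unfolding cov_def twon_set_def twon_lt_def by auto
qed

lemma NT_Suc: "NT (Suc n) = NT n \<union> ((\<lambda>i. ((i,1),(Suc n,1))) ` {1..n-1}
   \<union> (\<lambda>i. ((i,1),(Suc n,2))) ` {1..n} \<union> (\<lambda>i. ((i,2),(Suc n,2))) ` {1..n-1})" (is "_ = _ \<union> (?A \<union> ?B \<union> ?C)")
proof (rule set_eqI, clarify)
  fix a b c d :: nat
  show "((a,b),(c,d)) \<in> NT (Suc n) \<longleftrightarrow> ((a,b),(c,d)) \<in> NT n \<union> (?A \<union> ?B \<union> ?C)"
  proof
    assume A: "((a,b),(c,d)) \<in> NT (Suc n)"
    show "((a,b),(c,d)) \<in> NT n \<union> (?A \<union> ?B \<union> ?C)"
    proof (cases "c \<le> n")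
      case True then show ?thesis using A unfolding NT_def by auto
    next
      case False
      then have c: "c = Suc n" using A unfolding NT_def by auto
      have "b = 1 \<or> b = 2" "d = 1 \<or> d = 2" using A unfolding NT_def by auto
      then consider "b = 1" "d = 1" | "b = 1" "d = 2" | "b = 2" "d = 2" | "b = 2" "d = 1" by blast
      then show ?thesis
      proof cases
        case 1
        then have "((a,b),(c,d)) \<in> ?A" using A c unfolding NT_def by (auto intro!: rev_image_eqI[of a])
        then show ?thesis by blast
      next
        case 2
        then have "((a,b),(c,d)) \<in> ?B" using A c unfolding NT_def by (auto intro!: rev_image_eqI[of a])
        then show ?thesis by blast
      next
        case 3
        then have "((a,b),(c,d)) \<in> ?C" using A c unfolding NT_def by (auto intro!: rev_image_eqI[of a])
        then show ?thesis by blast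
      next
        case 4 then show ?thesis using A unfolding NT_def by auto
      qed
    qed
  next
    assume "((a,b),(c,d)) \<in> NT n \<union> (?A \<union> ?B \<union> ?C)"
    then show "((a,b),(c,d)) \<in> NT (Suc n)" unfolding NT_def by auto
  qed
qed

lemma NT_sub: "NT n \<subseteq> ({..n} \<times> {..2}) \<times> ({..n} \<times> {..2})"
proof
  fix x assume x: "x \<in> NT n"
  obtain a b c d where xe: "x = ((a,b),(c,d))" by (metis prod.exhaust)
  show "x \<in> ({..n} \<times> {..2}) \<times> ({..n} \<times> {..2})" using x unfolding xe NT_def by auto
qed

lemma NT_fin: "finite (NT n)"
  by (rule finite_subset[OF NT_sub]) auto

lemma NT_card: "n \<ge> 1 \<Longrightarrow> real (card (NT n)) = (real n - 1) * (3 * real n - 4) / 2"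
proof (induction n rule: nat_induct_at_least)
  case base
  have "NT 1 = {}" unfolding NT_def by auto
  then show ?case by simp
next
  case (Suc n)
  let ?A = "(\<lambda>i. ((i,1::nat),(Suc n,1::nat))) ` {1..n-1}"
  let ?B = "(\<lambda>i. ((i,1::nat),(Suc n,2::nat))) ` {1..n}"
  let ?C = "(\<lambda>i. ((i,2::nat),(Suc n,2::nat))) ` {1..n-1}"
  have cA: "card ?A = n - 1" by (subst card_image) (auto simp: inj_on_def)
  have cB: "card ?B = n" by (subst card_image) (auto simp: inj_on_def)
  have cC: "card ?C = n - 1" by (subst card_image) (auto simp: inj_on_def)
  have "card (NT (Suc n)) = card (NT n) + card (?A \<union> ?B \<union> ?C)"
    unfolding NT_Suc by (rule card_Un_disjoint[OF NT_fin]) (auto simp: NT_def)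
  also have "card (?A \<union> ?B \<union> ?C) = card (?A \<union> ?B) + card ?C"
    by (rule card_Un_disjoint) auto
  also have "card (?A \<union> ?B) = card ?A + card ?B"
    by (rule card_Un_disjoint) auto
  finally have "card (NT (Suc n)) = card (NT n) + (n - 1) + n + (n - 1)" unfolding cA cB cC by simp
  then have "real (card (NT (Suc n))) = real (card (NT n)) + 3 * real n - 2"
    using Suc.hyps by (simp add: of_nat_diff)
  then show ?case using Suc.IH by (simp add: field_simps) 
qed

lemma part_b:
  assumes "n \<ge> 1"
  shows "breadth TYPE('k::field) (twon_set n) twon_lt = card (noncov_rel (twon_set n) twon_lt)
          \<and> real (card (noncov_rel (twon_set n) twon_lt)) = (real n - 1) * (3 * real n - 4) / 2"
proof
  show "breadth TYPE('k::field) (twon_set n) twon_lt = card (noncov_rel (twon_set n) twon_lt)"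
  proof (rule generic[where f = "\<lambda>s. 2 * (n + 3 - (fst (snd s) + snd (snd s))) + (snd (fst s) - 1)"], goal_cases)
    case 1
    have "twon_set n \<subseteq> {..n} \<times> {..2}" unfolding twon_set_def by auto
    then show ?case by (rule finite_subset) auto
  next
    case (2 a b c) then show ?case by (auto simp: twon_lt_def prod_eq_iff)
  next
    case (3 p q)
    obtain a b c d where pe: "p = (a,b)" and qe: "q = (c,d)" by (metis prod.exhaust)
    have A: "1 \<le> a" "1 \<le> b" "b \<le> 2" "c \<le> n" "d \<le> 2" "a \<le> c" "b \<le> d" "a + b + 2 \<le> c + d"
      using 3 unfolding pe qe tw_noncov NT_def by auto
    show ?case unfolding pe qe
    proof (rule exI[of _ "(Suc a, b)"], intro conjI allI impI)
      show "cov (twon_set n) twon_lt (a, b) (Suc a, b)" unfolding tw_cov using A by auto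
      show "twon_lt (Suc a, b) (c, d)" unfolding twon_lt_def using A by auto
    next
      fix x assume x: "cov (twon_set n) twon_lt x (Suc a, b) \<and> x \<noteq> (a, b)"
      obtain u v where xe: "x = (u,v)" by (metis prod.exhaust)
      show "(\<lambda>s. 2 * (n + 3 - (fst (snd s) + snd (snd s))) + (snd (fst s) - 1)) (x, c, d)
          < (\<lambda>s. 2 * (n + 3 - (fst (snd s) + snd (snd s))) + (snd (fst s) - 1)) ((a, b), c, d)"
        using x A unfolding xe tw_cov by auto
    next
      fix y assume y: "cov (twon_set n) twon_lt (c, d) y"
      obtain u v where ye: "y = (u,v)" by (metis prod.exhaust)
      show "(\<lambda>s. 2 * (n + 3 - (fst (snd s) + snd (snd s))) + (snd (fst s) - 1)) ((Suc a, b), y)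
          < (\<lambda>s. 2 * (n + 3 - (fst (snd s) + snd (snd s))) + (snd (fst s) - 1)) ((a, b), c, d)"
        using y A unfolding ye tw_cov by auto
    qed
  qed
  show "real (card (noncov_rel (twon_set n) twon_lt)) = (real n - 1) * (3 * real n - 4) / 2"
    unfolding tw_noncov using NT_card[OF assms] .
qed



lemma div_bound:
  assumes "0 < (m::nat)" "1 \<le> j" "j \<le> m ^ (a + b)"
  shows "(j - 1) div m ^ b + 1 \<le> m ^ a"
proof -
  have "j - 1 < m ^ a * m ^ b" using assms by (simp add: power_add)
  then have "(j - 1) div m ^ b < m ^ a" by (rule less_mult_imp_div_less)
  then show ?thesis by simp
qed

lemma cover_iff:
  assumes m: "0 < m"
  shows "((i,k),(j,l)) \<in> tree_cover m n \<longleftrightarrow>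
     1 \<le> k \<and> k < n \<and> l = Suc k \<and> 1 \<le> j \<and> j \<le> m ^ k \<and> i = (j - 1) div m + 1"
proof
  assume "((i,k),(j,l)) \<in> tree_cover m n"
  then have A: "1 \<le> k" "k < n" "l = Suc k" "1 \<le> i" "i \<le> m ^ (k - 1)" "m * (i - 1) + 1 \<le> j" "j \<le> m * i"
    unfolding tree_cover_def by auto
  have "m * i \<le> m * m ^ (k - 1)" using A m by simp
  also have "m * m ^ (k - 1) = m ^ k" using A by (cases k) auto
  finally have jk: "j \<le> m ^ k" using A by linarith
  have mi: "m * i = m * (i - 1) + m" using A by (cases i) auto
  have "m * (i - 1) \<le> j - 1" "j - 1 < m * (i - 1) + m" using A m mi by linarith+
  then have "(j - 1) div m = i - 1"
    by (metis add.commute div_nat_eqI mult.commute mult_Suc_right plus_1_eq_Suc)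
  then show "1 \<le> k \<and> k < n \<and> l = Suc k \<and> 1 \<le> j \<and> j \<le> m ^ k \<and> i = (j - 1) div m + 1"
    using A jk by auto
next
  assume A: "1 \<le> k \<and> k < n \<and> l = Suc k \<and> 1 \<le> j \<and> j \<le> m ^ k \<and> i = (j - 1) div m + 1"
  have "i \<le> m ^ (k - 1)" using div_bound[OF m, of j "k - 1" 1] A by simp
  moreover have "m * (i - 1) + 1 \<le> j" "j \<le> m * i"
  proof -
    have e: "j - 1 = m * ((j - 1) div m) + (j - 1) mod m" by simp
    have "(j - 1) mod m < m" using m by simp
    moreover have "m * (i - 1) = m * ((j - 1) div m)" "m * i = m * ((j - 1) div m) + m" "1 \<le> j"
      using A by (simp_all add: algebra_simps)
    ultimately show "m * (i - 1) + 1 \<le> j" "j \<le> m * i" using e by linarith+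
  qed
  ultimately show "((i,k),(j,l)) \<in> tree_cover m n"
    unfolding tree_cover_def using A by auto
qed

lemma lt_fwd:
  assumes m: "0 < m" and xy: "(x,y) \<in> (tree_cover m n)\<^sup>+"
  shows "1 \<le> snd x \<and> snd x < snd y \<and> snd y \<le> n \<and> 1 \<le> fst y \<and> fst y \<le> m ^ (snd y - 1)
         \<and> fst x = (fst y - 1) div m ^ (snd y - snd x) + 1"
  using xy
proof (induction rule: trancl_induct)
  case (base y)
  obtain i k j l where e: "x = (i,k)" "y = (j,l)" by (metis prod.exhaust)
  show ?case using base cover_iff[OF m, of i k j l n] unfolding e by auto
next
  case (step y z)
  obtain i k where ex: "x = (i,k)" by (metis prod.exhaust)
  obtain i' l' where ey: "y = (i',l')" by (metis prod.exhaust)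
  obtain j l where ez: "z = (j,l)" by (metis prod.exhaust)
  have C: "1 \<le> l'" "l' < n" "l = Suc l'" "1 \<le> j" "j \<le> m ^ l'" "i' = (j - 1) div m + 1"
    using step(2) cover_iff[OF m, of i' l' j l n] unfolding ey ez by auto
  have I: "1 \<le> k" "k < l'" "i = (i' - 1) div m ^ (l' - k) + 1"
    using step(3) unfolding ex ey by auto
  have "i = (j - 1) div m div m ^ (l' - k) + 1" using I C by simp
  also have "\<dots> = (j - 1) div (m * m ^ (l' - k)) + 1" by (simp add: div_mult2_eq)
  also have "m * m ^ (l' - k) = m ^ (l - k)" using C I by (simp add: Suc_diff_le less_imp_le)
  finally show ?case unfolding ex ez using C I by auto
qed

lemma lt_bwd:
  assumes m: "0 < m"
  shows "\<forall>i j k l. l = k + Suc d \<longrightarrow> 1 \<le> k \<longrightarrow> l \<le> n \<longrightarrow> 1 \<le> j \<longrightarrow> j \<le> m ^ (l - 1)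
          \<longrightarrow> i = (j - 1) div m ^ (l - k) + 1 \<longrightarrow> ((i,k),(j,l)) \<in> (tree_cover m n)\<^sup>+"
proof (induction d)
  case 0
  show ?case
  proof (intro allI impI)
    fix i j k l :: nat
    assume A: "l = k + Suc 0" "1 \<le> k" "l \<le> n" "1 \<le> j" "j \<le> m ^ (l - 1)" "i = (j - 1) div m ^ (l - k) + 1"
    then have "((i,k),(j,l)) \<in> tree_cover m n" using cover_iff[OF m] by auto
    then show "((i,k),(j,l)) \<in> (tree_cover m n)\<^sup>+" by (rule r_into_trancl)
  qed
next
  case (Suc d)
  show ?case
  proof (intro allI impI)
    fix i j k l :: nat
    assume A: "l = k + Suc (Suc d)" "1 \<le> k" "l \<le> n" "1 \<le> j" "j \<le> m ^ (l - 1)" "i = (j - 1) div m ^ (l - k) + 1"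
    define i' where "i' = (j - 1) div m + 1"
    define l' where "l' = k + Suc d"
    have "j \<le> m ^ (l' - 1 + 1)" using A unfolding l'_def by simp
    then have i'b: "i' \<le> m ^ (l' - 1)" unfolding i'_def using div_bound[OF m, of j "l' - 1" 1] A by simp
    have "i = (j - 1) div (m * m ^ (Suc d)) + 1" using A by simp
    also have "\<dots> = (i' - 1) div m ^ (l' - k) + 1" unfolding i'_def l'_def by (simp add: div_mult2_eq)
    finally have ie: "i = (i' - 1) div m ^ (l' - k) + 1" .
    have "((i,k),(i',l')) \<in> (tree_cover m n)\<^sup>+"
    proof (rule Suc.IH[rule_format])
      show "l' = k + Suc d" "1 \<le> k" "l' \<le> n" "1 \<le> i'" "i' \<le> m ^ (l' - 1)"
        using A i'b unfolding l'_def i'_def by auto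
    qed (rule ie)
    moreover have "((i',l'),(j,l)) \<in> tree_cover m n"
      using cover_iff[OF m] A unfolding l'_def i'_def by auto
    ultimately show "((i,k),(j,l)) \<in> (tree_cover m n)\<^sup>+" by (rule trancl_into_trancl)
  qed
qed

lemma tree_lt_iff:
  assumes m: "0 < m"
  shows "tree_lt m n (i,k) (j,l) \<longleftrightarrow>
     1 \<le> k \<and> k < l \<and> l \<le> n \<and> 1 \<le> j \<and> j \<le> m ^ (l - 1) \<and> i = (j - 1) div m ^ (l - k) + 1"
proof
  assume "tree_lt m n (i,k) (j,l)"
  then show "1 \<le> k \<and> k < l \<and> l \<le> n \<and> 1 \<le> j \<and> j \<le> m ^ (l - 1) \<and> i = (j - 1) div m ^ (l - k) + 1"
    using lt_fwd[OF m] unfolding tree_lt_def by fastforce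
next
  assume A: "1 \<le> k \<and> k < l \<and> l \<le> n \<and> 1 \<le> j \<and> j \<le> m ^ (l - 1) \<and> i = (j - 1) div m ^ (l - k) + 1"
  then have "l = k + Suc (l - k - 1)" by simp
  then show "tree_lt m n (i,k) (j,l)" using lt_bwd[OF m, of "l - k - 1" n] A unfolding tree_lt_def by blast
qed

lemma tr_mem:
  assumes m: "0 < m" and lt: "tree_lt m n (i,k) (j,l)"
  shows "(i,k) \<in> tree_set m n" "(j,l) \<in> tree_set m n"
proof -
  have A: "1 \<le> k" "k < l" "l \<le> n" "1 \<le> j" "j \<le> m ^ (l - 1)" "i = (j - 1) div m ^ (l - k) + 1"
    using lt tree_lt_iff[OF m] by auto
  have "j \<le> m ^ ((k - 1) + (l - k))" using A by (simp add: Suc_diff_le less_imp_le)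
  then have "i \<le> m ^ (k - 1)" using div_bound[OF m, of j "k - 1" "l - k"] A by simp
  then show "(i,k) \<in> tree_set m n" "(j,l) \<in> tree_set m n" using A unfolding tree_set_def by auto
qed

lemma tr_mid:
  assumes m: "0 < m" and lt: "tree_lt m n (i,k) (j,l)" and kk: "k < kk" "kk < l"
  shows "tree_lt m n (i,k) ((j - 1) div m ^ (l - kk) + 1, kk) \<and> tree_lt m n ((j - 1) div m ^ (l - kk) + 1, kk) (j,l)"
proof -
  have A: "1 \<le> k" "k < l" "l \<le> n" "1 \<le> j" "j \<le> m ^ (l - 1)" "i = (j - 1) div m ^ (l - k) + 1"
    using lt tree_lt_iff[OF m] by auto
  have "j \<le> m ^ ((kk - 1) + (l - kk))" using A kk by simp
  then have b: "(j - 1) div m ^ (l - kk) + 1 \<le> m ^ (kk - 1)" using div_bound[OF m, of j "kk - 1" "l - kk"] A by simp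
  have "(j - 1) div m ^ (l - kk) div m ^ (kk - k) = (j - 1) div (m ^ (l - kk) * m ^ (kk - k))"
    by (simp add: div_mult2_eq)
  also have "m ^ (l - kk) * m ^ (kk - k) = m ^ (l - k)" using kk by (simp add: power_add[symmetric])
  finally have e: "(j - 1) div m ^ (l - kk) div m ^ (kk - k) = (j - 1) div m ^ (l - k)" .
  show ?thesis unfolding tree_lt_iff[OF m] using A kk b e by auto
qed

definition NTr :: "nat \<Rightarrow> nat \<Rightarrow> ((nat \<times> nat) \<times> (nat \<times> nat)) set" where
  "NTr m n = {((i,k),(j,l)). 1 \<le> k \<and> k + 2 \<le> l \<and> l \<le> n \<and> 1 \<le> j \<and> j \<le> m ^ (l - 1) \<and> i = (j - 1) div m ^ (l - k) + 1}"

lemma tr_noncov: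
  assumes m: "0 < m"
  shows "noncov_rel (tree_set m n) (tree_lt m n) = NTr m n"
proof (rule set_eqI, clarify)
  fix i k j l :: nat
  show "((i,k),(j,l)) \<in> noncov_rel (tree_set m n) (tree_lt m n) \<longleftrightarrow> ((i,k),(j,l)) \<in> NTr m n"
  proof
    assume "((i,k),(j,l)) \<in> noncov_rel (tree_set m n) (tree_lt m n)"
    then obtain z1 z2 where "tree_lt m n (i,k) (j,l)" "tree_lt m n (i,k) (z1,z2)" "tree_lt m n (z1,z2) (j,l)"
      unfolding noncov_rel_def by auto
    then show "((i,k),(j,l)) \<in> NTr m n" unfolding NTr_def tree_lt_iff[OF m] by auto
  next
    assume A: "((i,k),(j,l)) \<in> NTr m n"
    then have lt: "tree_lt m n (i,k) (j,l)" unfolding NTr_def tree_lt_iff[OF m] by auto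
    have kl: "k < Suc k" "Suc k < l" using A unfolding NTr_def by auto
    note mid = tr_mid[OF m lt kl]
    show "((i,k),(j,l)) \<in> noncov_rel (tree_set m n) (tree_lt m n)"
      using mid tr_mem[OF m lt] tr_mem(2)[OF m conjunct1[OF mid]] lt
      unfolding noncov_rel_def by blast
  qed
qed

lemma tr_cov:
  assumes m: "0 < m"
  shows "cov (tree_set m n) (tree_lt m n) (i,k) (j,l) \<longleftrightarrow> tree_lt m n (i,k) (j,l) \<and> l = Suc k"
proof
  assume A: "cov (tree_set m n) (tree_lt m n) (i,k) (j,l)"
  then have lt: "tree_lt m n (i,k) (j,l)" unfolding cov_def by auto
  then have "k < l" using tree_lt_iff[OF m] by auto
  moreover have "\<not> Suc k < l"
  proof
    assume "Suc k < l"
    then have mid: "tree_lt m n (i, k) ((j - 1) div m ^ (l - Suc k) + 1, Suc k) \<and>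
        tree_lt m n ((j - 1) div m ^ (l - Suc k) + 1, Suc k) (j, l)" using tr_mid[OF m lt, of "Suc k"] by simp
    then show False using tr_mem(2)[OF m conjunct1[OF mid]] A unfolding cov_def by blast
  qed
  ultimately show "tree_lt m n (i,k) (j,l) \<and> l = Suc k" using lt by auto
next
  assume A: "tree_lt m n (i,k) (j,l) \<and> l = Suc k"
  have "\<not> (\<exists>z\<in>tree_set m n. tree_lt m n (i,k) z \<and> tree_lt m n z (j,l))"
  proof
    assume "\<exists>z\<in>tree_set m n. tree_lt m n (i,k) z \<and> tree_lt m n z (j,l)"
    then obtain z1 z2 where "tree_lt m n (i,k) (z1,z2)" "tree_lt m n (z1,z2) (j,l)" by auto
    then show False using A unfolding tree_lt_iff[OF m] by auto
  qed
  then show "cov (tree_set m n) (tree_lt m n) (i,k) (j,l)" using A tr_mem[OF m] unfolding cov_def by blast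
qed

lemma NTr_Suc: "NTr m (Suc n) = NTr m n \<union>
   (\<lambda>(j,k). (((j - 1) div m ^ (Suc n - k) + 1, k), (j, Suc n))) ` ({1..m ^ n} \<times> {1..n - 1})"
  (is "_ = _ \<union> ?g ` ?D")
proof (rule set_eqI, clarify)
  fix i k j l :: nat
  show "((i,k),(j,l)) \<in> NTr m (Suc n) \<longleftrightarrow> ((i,k),(j,l)) \<in> NTr m n \<union> ?g ` ?D"
  proof
    assume A: "((i,k),(j,l)) \<in> NTr m (Suc n)"
    show "((i,k),(j,l)) \<in> NTr m n \<union> ?g ` ?D"
    proof (cases "l \<le> n")
      case True then show ?thesis using A unfolding NTr_def by auto
    next
      case False
      then have l: "l = Suc n" using A unfolding NTr_def by auto
      have "(j,k) \<in> ?D" "((i,k),(j,l)) = ?g (j,k)" using A l unfolding NTr_def by auto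
      then show ?thesis by blast
    qed
  next
    assume "((i,k),(j,l)) \<in> NTr m n \<union> ?g ` ?D"
    then show "((i,k),(j,l)) \<in> NTr m (Suc n)" unfolding NTr_def by auto
  qed
qed

lemma NTr_fin: "finite (NTr m n)"
proof (induction n)
  case 0
  have "NTr m 0 = {}" unfolding NTr_def by auto
  then show ?case by simp
next
  case (Suc n) then show ?case unfolding NTr_Suc by simp
qed

lemma NTr_card_Suc: "card (NTr m (Suc n)) = card (NTr m n) + m ^ n * (n - 1)"
proof -
  let ?g = "\<lambda>(j,k). (((j - 1) div m ^ (Suc n - k) + 1, k), (j, Suc n))"
  let ?D = "{1..m ^ n} \<times> {1..n - 1}"
  have "card (NTr m (Suc n)) = card (NTr m n) + card (?g ` ?D)"
    unfolding NTr_Suc by (rule card_Un_disjoint[OF NTr_fin]) (auto simp: NTr_def)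
  also have "card (?g ` ?D) = card ?D" by (rule card_image) (auto simp: inj_on_def)
  also have "card ?D = m ^ n * (n - 1)" by (simp add: card_cartesian_product)
  finally show ?thesis .
qed

lemma NTr_card:
  assumes m: "2 \<le> m" and n: "1 \<le> n"
  shows "real (card (NTr m n)) = ((real n - 2) * real m ^ (n + 1) + (1 - real n) * real m ^ n + real m ^ 2) / (real m - 1) ^ 2"
  using n
proof (induction n rule: nat_induct_at_least)
  case base
  have "NTr m 1 = {}" unfolding NTr_def by auto
  then show ?case by (simp add: power2_eq_square)
next
  case (Suc n)
  have mm: "(real m - 1) ^ 2 \<noteq> 0" using m by simp
  have "real (card (NTr m (Suc n))) = real (card (NTr m n)) + real m ^ n * (real n - 1)"
    unfolding NTr_card_Suc using Suc.hyps by (simp add: of_nat_diff)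
  also have "\<dots> = ((real (Suc n) - 2) * real m ^ (Suc n + 1) + (1 - real (Suc n)) * real m ^ Suc n + real m ^ 2) / (real m - 1) ^ 2"
    unfolding Suc.IH using mm by (simp add: field_simps power2_eq_square)
  finally show ?case .
qed

lemma part_c:
  assumes m: "2 \<le> m" and n: "1 \<le> n"
  shows "breadth TYPE('k::field) (tree_set m n) (tree_lt m n) = card (noncov_rel (tree_set m n) (tree_lt m n))
          \<and> real (card (noncov_rel (tree_set m n) (tree_lt m n)))
              = ((real n - 2) * real m ^ (n + 1) + (1 - real n) * real m ^ n + real m ^ 2) / (real m - 1) ^ 2"
proof
  have m0: "0 < m" using m by simp
  show "breadth TYPE('k::field) (tree_set m n) (tree_lt m n) = card (noncov_rel (tree_set m n) (tree_lt m n))"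
  proof (rule generic[where f = "\<lambda>s. n - snd (snd s)"], goal_cases)
    case 1
    have "tree_set m n \<subseteq> {..m ^ n} \<times> {..n}"
    proof
      fix x assume x: "x \<in> tree_set m n"
      obtain i k where xe: "x = (i,k)" by (metis prod.exhaust)
      have "i \<le> m ^ (k - 1)" "k \<le> n" using x unfolding xe tree_set_def by auto
      moreover have "m ^ (k - 1) \<le> m ^ n" using m \<open>k \<le> n\<close> by (intro power_increasing) auto
      ultimately show "x \<in> {..m ^ n} \<times> {..n}" unfolding xe by auto
    qed
    then show ?case by (rule finite_subset) auto
  next
    case (2 a b c) then show ?case unfolding tree_lt_def by (meson trancl_trans)
  next
    case (3 p q)
    obtain i k j l where pe: "p = (i,k)" and qe: "q = (j,l)" by (metis prod.exhaust)
    have A: "1 \<le> k" "k + 2 \<le> l" "l \<le> n" "1 \<le> j" "j \<le> m ^ (l - 1)" "i = (j - 1) div m ^ (l - k) + 1"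
      using 3 unfolding pe qe tr_noncov[OF m0] NTr_def by auto
    have lt: "tree_lt m n (i,k) (j,l)" unfolding tree_lt_iff[OF m0] using A by auto
    define ja where "ja = (j - 1) div m ^ (l - Suc k) + 1"
    have mid: "tree_lt m n (i,k) (ja, Suc k)" "tree_lt m n (ja, Suc k) (j,l)"
      using tr_mid[OF m0 lt, of "Suc k"] A unfolding ja_def by auto
    show ?case unfolding pe qe
    proof (rule exI[of _ "(ja, Suc k)"], intro conjI allI impI)
      show "cov (tree_set m n) (tree_lt m n) (i, k) (ja, Suc k)" unfolding tr_cov[OF m0] using mid by auto
      show "tree_lt m n (ja, Suc k) (j, l)" by (rule mid(2))
    next
      fix x assume x: "cov (tree_set m n) (tree_lt m n) x (ja, Suc k) \<and> x \<noteq> (i, k)"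
      obtain u v where xe: "x = (u,v)" by (metis prod.exhaust)
      have "tree_lt m n (u,v) (ja, Suc k)" "v = k" using x unfolding xe tr_cov[OF m0] by auto
      then have "u = i" using mid(1) unfolding tree_lt_iff[OF m0] by auto
      then have False using x \<open>v = k\<close> unfolding xe by auto
      then show "(\<lambda>s. n - snd (snd s)) (x, j, l) < (\<lambda>s. n - snd (snd s)) ((i, k), j, l)" ..
    next
      fix y assume y: "cov (tree_set m n) (tree_lt m n) (j, l) y"
      obtain u v where ye: "y = (u,v)" by (metis prod.exhaust)
      have "tree_lt m n (j,l) (u,v)" "v = Suc l" using y unfolding ye tr_cov[OF m0] by auto
      then have "v \<le> n" "v = Suc l" unfolding tree_lt_iff[OF m0] by auto
      then show "(\<lambda>s. n - snd (snd s)) ((ja, Suc k), y) < (\<lambda>s. n - snd (snd s)) ((i, k), j, l)"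
        unfolding ye by simp
    qed
  qed
  show "real (card (noncov_rel (tree_set m n) (tree_lt m n)))
              = ((real n - 2) * real m ^ (n + 1) + (1 - real n) * real m ^ n + real m ^ 2) / (real m - 1) ^ 2"
    unfolding tr_noncov[OF m0] by (rule NTr_card[OF m n])
qed


theorem theorem2:
  fixes n m :: nat
  assumes "alg_closed TYPE('k::field_char_0)"
  shows "(n \<ge> 1 \<longrightarrow>
            breadth TYPE('k) (chain_set n) chain_lt = card (noncov_rel (chain_set n) chain_lt)
          \<and> real (card (noncov_rel (chain_set n) chain_lt)) = (real n - 1) * (real n - 2) / 2)
       \<and> (n \<ge> 1 \<longrightarrow>
            breadth TYPE('k) (twon_set n) twon_lt = card (noncov_rel (twon_set n) twon_lt)
          \<and> real (card (noncov_rel (twon_set n) twon_lt)) = (real n - 1) * (3 * real n - 4) / 2)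
       \<and> (m \<ge> 2 \<and> n \<ge> 1 \<longrightarrow>
            breadth TYPE('k) (tree_set m n) (tree_lt m n) = card (noncov_rel (tree_set m n) (tree_lt m n))
          \<and> real (card (noncov_rel (tree_set m n) (tree_lt m n)))
              = ((real n - 2) * real m ^ (n + 1) + (1 - real n) * real m ^ n + real m ^ 2) / (real m - 1) ^ 2)"
  using part_a[where 'k='k] part_b[where 'k='k] part_c[where 'k='k] by blast

end
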